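(* For integers $d,k\ge0$ let $E'_k(d)=\sum_{i=0}^k\binom{k}{i}E_i(d)(-\tfrac d2)^{k-i}$. Then: (1) for all integers $a,b,k\ge0$, $E'_k(a+b+2)=\sum_{i+j=k}\binom{k}{i}E'_i(a)E'_j(b)$; (2) $\displaystyle\sum_{k\ge0}E'_k(d)\frac{z^k}{k!}=\Bigg(\sum_{t\ge0}\frac{z^{2t}}{4^t(2t+1)!}\Bigg)^{d+2}$; (3) when $d\ge k-1$, $E'_k(d)=\mathbb{E}\big[(\mathcal{X}_d-\tfrac d2)^k\big]$.
   Context: $\mathcal{X}_d$ is the number of descents of a uniformly random permutation of $\{1,\dots,d+1\}$. For each $k\ge0$, $E_k(d)\in\mathbb{Q}[d]$ is the polynomial of degree $k$ determined by $\sum_{k\ge0}\frac{E_k(d)}{k!}z^k=\big(\frac{e^z-1}{z}\big)^{d+2}e^{-z}$; it satisfies $E_k(d)=\mathbb{E}[\mathcal{X}_d^k]$ for all integers $d\ge\max(k-1,0)$. *)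

theory Defs
  imports "HOL-Probability.Probability" "HOL-Computational_Algebra.Formal_Power_Series"
begin

text \<open>The formal power series (e^z - 1)/z = sum_n z^n/(n+1)!.\<close>
definition expm1_div :: "real fps" where
  "expm1_div = Abs_fps (\<lambda>n. 1 / fact (Suc n))"

definition E :: "nat \<Rightarrow> nat \<Rightarrow> real" where
  "E k d = fact k * fps_nth (expm1_div ^ (d + 2) * fps_exp (-1)) k"

definition E' :: "nat \<Rightarrow> nat \<Rightarrow> real" where
  "E' k d = (\<Sum>i=0..k. real (k choose i) * E i d * (- real d / 2) ^ (k - i))"

definition descents :: "nat \<Rightarrow> (nat \<Rightarrow> nat) \<Rightarrow> nat" where
  "descents n \<sigma> = card {i \<in> {1..<n}. \<sigma> (Suc i) < \<sigma> i}"

definition unif_perm :: "nat \<Rightarrow> (nat \<Rightarrow> nat) pmf" where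
  "unif_perm n = pmf_of_set {\<sigma>. \<sigma> permutes {1..n}}"

end

theory Submission
  imports Defs "HOL-Combinatorics.Multiset_Permutations"
begin

definition dl :: "nat list \<Rightarrow> nat" where
  "dl xs = card {j. Suc j < length xs \<and> xs ! Suc j < xs ! j}"

lemma dl_fin: "finite {j. Suc j < length xs \<and> xs ! Suc j < xs ! j}"
  by (rule finite_subset[of _ "{..<length xs}"]) auto

lemma dl_Nil[simp]: "dl [] = 0" and dl_single[simp]: "dl [x] = 0"
  by (auto simp: dl_def)

lemma dl_Cons2: "dl (x # y # zs) = (if y < x then 1 else 0) + dl (y # zs)"
proof -
  let ?S = "{j. Suc j < length (y#zs) \<and> (y#zs) ! Suc j < (y#zs) ! j}"
  have eq: "{j. Suc j < length (x#y#zs) \<and> (x#y#zs) ! Suc j < (x#y#zs) ! j} =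
        (if y < x then {0} else {}) \<union> Suc ` ?S"
    apply (rule set_eqI)
    subgoal for j by (cases j) auto
    done
  have "card ((if y < x then {0} else {}) \<union> Suc ` ?S) = (if y < x then 1 else 0) + card (Suc ` ?S)"
    by (subst card_Un_disjoint) (auto intro: dl_fin)
  also have "card (Suc ` ?S) = card ?S" by (simp add: card_image)
  finally show ?thesis unfolding dl_def eq by simp
qed

lemma dl_append:
  "dl (xs @ ys) = dl xs + dl ys + (if xs \<noteq> [] \<and> ys \<noteq> [] \<and> hd ys < last xs then 1 else 0)"
proof (induction xs)
  case Nil then show ?case by simp
next
  case (Cons x xs)
  show ?case
  proof (cases xs)
    case Nil
    then show ?thesis by (cases ys) (auto simp: dl_Cons2)
  next
    case (Cons x' xs')
    then show ?thesis using Cons.IH by (auto simp: dl_Cons2)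
  qed
qed

lemma dl_max_Cons:
  assumes "\<forall>z\<in>set zs. z < m"
  shows "dl (m # zs) = (if zs = [] then 0 else 1) + dl zs"
  using assms by (cases zs) (auto simp: dl_Cons2)

lemma dl_insert:
  assumes "\<forall>z\<in>set xs. z < m" "p \<le> length xs"
  shows "dl (take p xs @ m # drop p xs) =
    (if p < length xs \<and> \<not> (0 < p \<and> xs ! p < xs ! (p - 1)) then dl xs + 1 else dl xs)"
proof -
  let ?A = "take p xs" and ?B = "drop p xs"
  have sA: "\<forall>z\<in>set ?A. z < m" "\<forall>z\<in>set ?B. z < m" using assms(1)
    by (auto dest: in_set_takeD in_set_dropD)
  have "dl xs = dl (?A @ ?B)" by simp
  also have "\<dots> = dl ?A + dl ?B + (if ?A \<noteq> [] \<and> ?B \<noteq> [] \<and> hd ?B < last ?A then 1 else 0)"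
    by (rule dl_append)
  finally have 1: "dl xs = \<dots>" .
  have "dl (?A @ m # ?B) = dl ?A + dl (m # ?B)"
  proof -
    have "?A \<noteq> [] \<Longrightarrow> last ?A < m" using sA(1) last_in_set[of ?A] by blast
    then show ?thesis by (subst dl_append) auto
  qed
  also have "\<dots> = dl ?A + (if ?B = [] then 0 else 1) + dl ?B"
    using sA by (subst dl_max_Cons) auto
  finally have 2: "dl (?A @ m # ?B) = \<dots>" .
  have 3: "(?A \<noteq> [] \<and> ?B \<noteq> [] \<and> hd ?B < last ?A) \<longleftrightarrow> (0 < p \<and> p < length xs \<and> xs ! p < xs ! (p - 1))"
  proof (cases "0 < p \<and> p < length xs")
    case True
    then have "hd ?B = xs ! p" by (simp add: hd_drop_conv_nth)
    moreover have "last ?A = xs ! (p - 1)" using True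
      by (subst last_conv_nth) (auto simp: min_def)
    ultimately show ?thesis using True by auto
  next
    case False
    then show ?thesis using assms(2) by auto
  qed
  show ?thesis using 1 2 3 assms(2) by auto
qed

lemma dl_le: "dl xs \<le> length xs"
proof -
  have "dl xs \<le> card {..<length xs}" unfolding dl_def by (rule card_mono) auto
  then show ?thesis by simp
qed

lemma dl_count:
  "card {p \<in> {0..<length xs}. 0 < p \<and> xs ! p < xs ! (p - 1)} = dl xs"
proof -
  have "{p \<in> {0..<length xs}. 0 < p \<and> xs ! p < xs ! (p - 1)} =
        Suc ` {j. Suc j < length xs \<and> xs ! Suc j < xs ! j}"
    apply (rule set_eqI)
    subgoal for p by (cases p) auto
    done
  then show ?thesis unfolding dl_def by (simp add: card_image)
qed

lemma sum_insert:
  fixes f :: "nat \<Rightarrow> real"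
  assumes "\<forall>z\<in>set xs. z < m"
  shows "(\<Sum>p\<in>{0..length xs}. f (dl (take p xs @ m # drop p xs))) =
     real (dl xs + 1) * f (dl xs) + real (length xs - dl xs) * f (dl xs + 1)"
proof -
  let ?n = "length xs" and ?D = "dl xs"
  define C where "C = {p \<in> {0..<?n}. 0 < p \<and> xs ! p < xs ! (p - 1)}"
  define P where "P = insert ?n C"
  have PA: "P \<subseteq> {0..?n}" by (auto simp: P_def C_def)
  have cP: "card P = ?D + 1" unfolding P_def using dl_count[of xs]
    by (subst card_insert_disjoint) (auto simp: C_def)
  have cAP: "card ({0..?n} - P) = ?n - ?D"
    using PA cP by (subst card_Diff_subset) (auto intro: finite_subset)
  have v1: "dl (take p xs @ m # drop p xs) = ?D" if "p \<in> P" for p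
    using that assms by (subst dl_insert) (auto simp: P_def C_def)
  have v2: "dl (take p xs @ m # drop p xs) = ?D + 1" if "p \<in> {0..?n} - P" for p
    using that assms by (subst dl_insert) (auto simp: P_def C_def)
  have "(\<Sum>p\<in>{0..?n}. f (dl (take p xs @ m # drop p xs))) =
     (\<Sum>p\<in>P. f (dl (take p xs @ m # drop p xs))) + (\<Sum>p\<in>{0..?n} - P. f (dl (take p xs @ m # drop p xs)))"
    using PA by (subst sum.subset_diff[of P]) auto
  also have "\<dots> = (\<Sum>p\<in>P. f ?D) + (\<Sum>p\<in>{0..?n} - P. f (?D + 1))"
    using v1 v2 by simp
  also have "\<dots> = real (?D + 1) * f ?D + real (?n - ?D) * f (?D + 1)"
    using cP cAP by simp
  finally show ?thesis .
qed

abbreviation PL :: "nat \<Rightarrow> nat list set" where "PL n \<equiv> permutations_of_set {1..n}"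

lemma PL_length: "xs \<in> PL n \<Longrightarrow> length xs = n"
  by (simp add: length_finite_permutations_of_set)

lemma PL_Suc_image:
  "PL (Suc n) = (\<lambda>(xs, p). take p xs @ Suc n # drop p xs) ` (PL n \<times> {0..n})"
proof (rule set_eqI, rule iffI)
  fix zs assume zs: "zs \<in> PL (Suc n)"
  then have "Suc n \<in> set zs" by (simp add: permutations_of_set_def)
  then obtain ys ws where zs_eq: "zs = ys @ Suc n # ws" by (meson split_list)
  have d: "distinct zs" "set zs = {1..Suc n}" using zs by (auto simp: permutations_of_set_def)
  have "set (ys @ ws) = set zs - {Suc n}" using d(1) unfolding zs_eq by auto
  also have "\<dots> = {1..n}" unfolding d(2) by auto
  finally have xs: "ys @ ws \<in> PL n"
    using d(1) unfolding zs_eq permutations_of_set_def by auto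
  have "length (ys @ ws) = n" using PL_length[OF xs] .
  then have "(ys @ ws, length ys) \<in> PL n \<times> {0..n}" using xs by auto
  moreover have "zs = (\<lambda>(xs, p). take p xs @ Suc n # drop p xs) (ys @ ws, length ys)"
    by (simp add: zs_eq)
  ultimately show "zs \<in> (\<lambda>(xs, p). take p xs @ Suc n # drop p xs) ` (PL n \<times> {0..n})" by blast
next
  fix zs assume "zs \<in> (\<lambda>(xs, p). take p xs @ Suc n # drop p xs) ` (PL n \<times> {0..n})"
  then obtain xs p where xs: "xs \<in> PL n" and p: "p \<le> n" and zs: "zs = take p xs @ Suc n # drop p xs"
    by auto
  have d: "distinct xs" "set xs = {1..n}" using xs by (auto simp: permutations_of_set_def)
  have e: "set (take p xs) \<union> set (drop p xs) = set xs" by (metis set_append append_take_drop_id)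
  have "set zs = set xs \<union> {Suc n}" using e unfolding zs by auto
  also have "\<dots> = {1..Suc n}" unfolding d(2) by auto
  finally have 1: "set zs = {1..Suc n}" .
  have dd: "distinct (take p xs)" "distinct (drop p xs)" "set (take p xs) \<inter> set (drop p xs) = {}"
    using d(1) by (metis distinct_append append_take_drop_id)+
  moreover have "Suc n \<notin> set (take p xs)" "Suc n \<notin> set (drop p xs)" using d
    by (auto dest: in_set_takeD in_set_dropD)
  ultimately have "distinct zs" unfolding zs by simp
  then show "zs \<in> PL (Suc n)" using 1 by (simp add: permutations_of_set_def)
qed

lemma PL_Suc_inj:
  "inj_on (\<lambda>(xs, p). take p xs @ Suc n # drop p xs) (PL n \<times> {0..n})"
proof (rule inj_onI, clarify)
  fix xs p xs' p'
  assume a: "xs \<in> PL n" "p \<in> {0..n}" "xs' \<in> PL n" "p' \<in> {0..n}"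
    and eq: "take p xs @ Suc n # drop p xs = take p' xs' @ Suc n # drop p' xs'"
  have s: "set xs = {1..n}" "set xs' = {1..n}" using a by (auto simp: permutations_of_set_def)
  have "Suc n \<notin> set (take p xs)" "Suc n \<notin> set (drop p xs)"
       "Suc n \<notin> set (take p' xs')" "Suc n \<notin> set (drop p' xs')" using s
    by (auto dest: in_set_takeD in_set_dropD)
  then have "take p xs = take p' xs' \<and> drop p xs = drop p' xs'"
    using eq append_Cons_eq_iff by metis
  moreover have "length xs = n" "length xs' = n" using a PL_length by auto
  ultimately have "xs = xs'" "length (take p xs) = length (take p' xs')"
    by (metis append_take_drop_id) (metis \<open>take p xs = take p' xs' \<and> drop p xs = drop p' xs'\<close>)
  moreover have "length (take p xs) = p" "length (take p' xs') = p'"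
    using a \<open>length xs = n\<close> \<open>length xs' = n\<close> by simp_all
  ultimately show "xs = xs' \<and> p = p'" by simp
qed

lemma sum_PL_Suc:
  fixes f :: "nat \<Rightarrow> real"
  shows "(\<Sum>zs\<in>PL (Suc n). f (dl zs)) =
    (\<Sum>xs\<in>PL n. real (dl xs + 1) * f (dl xs) + real (n - dl xs) * f (dl xs + 1))"
proof -
  have "(\<Sum>zs\<in>PL (Suc n). f (dl zs)) =
     (\<Sum>(xs, p)\<in>PL n \<times> {0..n}. f (dl (take p xs @ Suc n # drop p xs)))"
    unfolding PL_Suc_image by (subst sum.reindex[OF PL_Suc_inj]) (simp add: case_prod_unfold)
  also have "\<dots> = (\<Sum>xs\<in>PL n. \<Sum>p\<in>{0..n}. f (dl (take p xs @ Suc n # drop p xs)))"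
    by (subst sum.cartesian_product) simp
  also have "\<dots> = (\<Sum>xs\<in>PL n. real (dl xs + 1) * f (dl xs) + real (n - dl xs) * f (dl xs + 1))"
  proof (rule sum.cong[OF refl])
    fix xs assume xs: "xs \<in> PL n"
    then have l: "length xs = n" by (rule PL_length)
    have "\<forall>z\<in>set xs. z < Suc n" using xs by (auto simp: permutations_of_set_def)
    from sum_insert[OF this, of f] l
    show "(\<Sum>p\<in>{0..n}. f (dl (take p xs @ Suc n # drop p xs))) =
          real (dl xs + 1) * f (dl xs) + real (n - dl xs) * f (dl xs + 1)" by simp
  qed
  finally show ?thesis .
qed

definition M :: "nat \<Rightarrow> nat \<Rightarrow> real" where
  "M n k = (\<Sum>xs\<in>PL n. real (dl xs) ^ k)"

definition R :: "(nat \<Rightarrow> real) \<Rightarrow> nat \<Rightarrow> real \<Rightarrow> real" where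
  "R u k c = u (Suc k) + u k + c * (\<Sum>i=0..k. real (k choose i) * u i)
      - (\<Sum>i=0..k. real (k choose i) * u (Suc i))"

lemma binom_expand: "((x::real) + 1) ^ k = (\<Sum>i=0..k. real (k choose i) * x ^ i)"
  by (simp add: binomial_ring atMost_atLeast0)

lemma M_rec: "M (Suc n) k = R (M n) k (real n)"
proof -
  have pt: "real (D + 1) * real D ^ k + real (n - D) * real (D + 1) ^ k =
      real D ^ Suc k + real D ^ k + real n * (\<Sum>i=0..k. real (k choose i) * real D ^ i)
      - (\<Sum>i=0..k. real (k choose i) * real D ^ Suc i)" if "D \<le> n" for D
  proof -
    have e: "real (D + 1) ^ k = (\<Sum>i=0..k. real (k choose i) * real D ^ i)"
      using binom_expand[of "real D" k] by (simp add: add.commute)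
    have e2: "real D * (\<Sum>i=0..k. real (k choose i) * real D ^ i) = (\<Sum>i=0..k. real (k choose i) * real D ^ Suc i)"
      by (simp add: sum_distrib_left algebra_simps)
    have "real (D + 1) * real D ^ k + real (n - D) * real (D + 1) ^ k =
       real D ^ Suc k + real D ^ k + real n * real (D + 1) ^ k - real D * real (D + 1) ^ k"
      using that by (simp add: of_nat_diff algebra_simps)
    then show ?thesis using e e2 by simp
  qed
  have "M (Suc n) k = (\<Sum>xs\<in>PL n. real (dl xs + 1) * real (dl xs) ^ k + real (n - dl xs) * real (dl xs + 1) ^ k)"
    unfolding M_def using sum_PL_Suc[of "\<lambda>j. real j ^ k" n] by simp
  also have "\<dots> = (\<Sum>xs\<in>PL n. real (dl xs) ^ Suc k + real (dl xs) ^ k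
      + real n * (\<Sum>i=0..k. real (k choose i) * real (dl xs) ^ i)
      - (\<Sum>i=0..k. real (k choose i) * real (dl xs) ^ Suc i))"
  proof (rule sum.cong[OF refl])
    fix xs assume "xs \<in> PL n"
    then have "dl xs \<le> n" using dl_le[of xs] PL_length by simp
    then show "real (dl xs + 1) * real (dl xs) ^ k + real (n - dl xs) * real (dl xs + 1) ^ k =
      real (dl xs) ^ Suc k + real (dl xs) ^ k
      + real n * (\<Sum>i=0..k. real (k choose i) * real (dl xs) ^ i)
      - (\<Sum>i=0..k. real (k choose i) * real (dl xs) ^ Suc i)" by (rule pt)
  qed
  also have "\<dots> = R (M n) k (real n)"
    unfolding R_def M_def
    by (simp add: sum.distrib sum_subtractf sum_distrib_left sum.swap[of _ "{0..k}"])
  finally show ?thesis .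
qed

lemma R_lin: "R (\<lambda>j. a * u j) k c = a * R u k c"
  unfolding R_def by (simp add: sum_distrib_left algebra_simps)

lemma R_diff: "R u k c - R v k c = R (\<lambda>j. u j - v j) k c"
  unfolding R_def by (simp add: sum_subtractf algebra_simps)

lemma R_low:
  assumes "\<forall>i<k. w i = 0"
  shows "R w k c = (1 + c - real k) * w k"
proof -
  have s1: "(\<Sum>i=0..k. real (k choose i) * w i) = w k"
    using assms by (subst sum.last_plus) (auto intro!: sum.neutral)
  have s2: "(\<Sum>i=0..k. real (k choose i) * w (Suc i)) = real k * w k + w (Suc k)"
  proof (cases k)
    case 0 then show ?thesis by simp
  next
    case (Suc k')
    have "(\<Sum>i=0..Suc k'. real (Suc k' choose i) * w (Suc i)) =
       (\<Sum>i=0..k'. real (Suc k' choose i) * w (Suc i)) + w (Suc (Suc k'))"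
      by simp
    also have "(\<Sum>i=0..k'. real (Suc k' choose i) * w (Suc i)) = real (Suc k') * w (Suc k')"
      using assms Suc by (subst sum.last_plus) (auto intro!: sum.neutral)
    finally show ?thesis using Suc by simp
  qed
  show ?thesis unfolding R_def s1 s2 by (simp add: algebra_simps)
qed

lemma R_cong:
  assumes "\<forall>i<k. u i = v i" "u k = v k \<or> c = real k - 1"
  shows "R u k c = R v k c"
proof -
  have "R u k c - R v k c = (1 + c - real k) * (u k - v k)"
    unfolding R_diff using assms(1) by (subst R_low) auto
  also have "\<dots> = 0" using assms(2) by auto
  finally show ?thesis by simp
qed



definition G :: "nat \<Rightarrow> real fps" where
  "G d = expm1_div ^ (d + 2) * fps_exp (-1)"

lemma E_G: "E k d = fact k * fps_nth (G d) k"
  by (simp add: E_def G_def)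

lemma Xg: "fps_X * expm1_div = fps_exp 1 - 1"
proof (rule fps_ext)
  fix n show "fps_nth (fps_X * expm1_div) n = fps_nth (fps_exp 1 - 1) n"
    by (cases n) (auto simp: expm1_div_def algebra_simps)
qed

lemma Xg': "fps_X * fps_deriv expm1_div = fps_exp 1 - expm1_div"
proof (rule fps_ext)
  fix n
  show "fps_nth (fps_X * fps_deriv expm1_div) n = fps_nth (fps_exp 1 - expm1_div) n"
  proof (cases n)
    case 0 then show ?thesis by (simp add: expm1_div_def)
  next
    case (Suc m)
    have f: "fact (Suc (Suc m)) = (real m + 2) * (fact (Suc m) :: real)" by simp
    have p: "(fact (Suc m) :: real) > 0" by simp
    have q: "(1 + real m) / ((real m + 2) * F) = 1 / F - 1 / ((real m + 2) * F)" if "F > 0" for F :: real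
      using that by (simp add: divide_simps)
    show ?thesis using q[OF p] by (simp add: Suc expm1_div_def f del: fact_Suc)
  qed
qed

lemma Xcancel: "fps_X * (a::real fps) = fps_X * b \<Longrightarrow> a = b"
proof (rule fps_ext)
  fix n assume "fps_X * a = fps_X * b"
  then have "fps_nth (fps_X * a) (Suc n) = fps_nth (fps_X * b) (Suc n)" by simp
  then show "fps_nth a n = fps_nth b n" by simp
qed

lemma ee: "fps_exp (1::real) * fps_exp (-1) = 1"
  by (simp flip: fps_exp_add_mult)

lemma ring_id:
  fixes X g g' P c e ei :: "'a::comm_ring_1"
  assumes h1: "X*g = e - 1" and h2: "X*g' = e - g" and h3: "e*ei = 1"
  shows "X * (P*g*ei + (c+1)*(P*g*ei*e) + ((c+2)*g'*P*ei - P*g*ei) - ((c+2)*g'*P*ei - P*g*ei)*e)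
     = X * ((c+2)*(P*g*g*ei))"
proof -
  have "X * (P*g*ei + (c+1)*(P*g*ei*e) + ((c+2)*g'*P*ei - P*g*ei) - ((c+2)*g'*P*ei - P*g*ei)*e)
     = (c + 1) * P * (e * ei) * (X * g) + P * (e * ei) * (X * g)
       + (c + 2) * P * ei * (X * g') * (1 - e)"
    by (simp add: algebra_simps)
  also have "\<dots> = (c + 1) * P * (X * g) + P * (X * g)
       + (c + 2) * P * ei * (e - g) * (1 - e)"
    unfolding h2 h3 by simp
  also have "\<dots> = (c + 2) * P * (X * g) * (1 - ei * (e - g))"
    unfolding h1 by (simp add: algebra_simps)
  also have "1 - ei * (e - g) = ei * g" using h3 by (simp add: algebra_simps)
  also have "(c + 2) * P * (X * g) * (ei * g) = X * ((c+2)*(P*g*g*ei))"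
    by (simp add: algebra_simps)
  finally show ?thesis .
qed

lemma G_rec:
  "fps_const (real (d + 2)) * G (Suc d) = G d + fps_const (real (d + 1)) * (G d * fps_exp 1)
     + fps_deriv (G d) - fps_deriv (G d) * fps_exp 1"
proof -
  define g where "g = expm1_div"
  define P where "P = g ^ (d + 1)"
  define c where "c = (of_nat d :: real fps)"
  define e where "e = fps_exp (1::real)"
  define ei where "ei = fps_exp (-1::real)"
  define g' where "g' = fps_deriv g"
  have G1: "G d = P * g * ei" by (simp add: G_def P_def g_def ei_def)
  have G2: "G (Suc d) = P * g * g * ei" by (simp add: G_def P_def g_def ei_def algebra_simps)
  have m1: "d + 2 - 1 = d + 1" by simp
  have d1: "fps_deriv (g ^ (d+2)) = fps_const (real (d+2)) * g' * P"
    by (rule trans[OF fps_deriv_power]) (simp only: m1 P_def g'_def of_nat_id)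
  have d2: "fps_deriv ei = - ei" unfolding ei_def by (rule fps_ext) simp
  have d3: "g ^ (d+2) = P * g" by (simp add: P_def)
  have dc: "fps_const (real (d + 2)) = c + 2"
  proof -
    have "fps_const (real (d + 2)) = of_nat (d + 2)" by (rule fps_of_nat)
    then show ?thesis by (simp add: c_def)
  qed
  have dG: "fps_deriv (G d) = (c + 2) * g' * P * ei - P * g * ei"
  proof -
    have "fps_deriv (G d) = fps_deriv (g ^ (d+2)) * ei + g ^ (d+2) * fps_deriv ei"
      unfolding G_def g_def ei_def by (simp only: fps_deriv_mult add.commute)
    then show ?thesis unfolding d1 d2 unfolding d3 dc by (simp add: algebra_simps)
  qed
  have c1: "fps_const (real (d + 1)) = c + 1"
  proof -
    have "fps_const (real (d + 1)) = of_nat (d + 1)" by (rule fps_of_nat)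
    then show ?thesis by (simp add: c_def)
  qed
  note c2 = dc c1
  have h1: "fps_X * g = e - 1" by (simp add: Xg g_def e_def)
  have h2: "fps_X * g' = e - g" by (simp add: Xg' g_def g'_def e_def)
  have h3: "e * ei = 1" by (simp add: ee e_def ei_def)
  show ?thesis unfolding c2 e_def[symmetric] dG unfolding G1 G2
    by (rule Xcancel, rule ring_id[OF h1 h2 h3, symmetric])
qed

lemma conv_e:
  fixes A :: "real fps"
  shows "fact k * fps_nth (A * fps_exp 1) k = (\<Sum>i=0..k. real (k choose i) * (fact i * fps_nth A i))"
proof -
  have "fact k * fps_nth (A * fps_exp 1) k = (\<Sum>i=0..k. fact k * (fps_nth A i / fact (k - i)))"
    by (simp add: fps_mult_nth sum_distrib_left)
  also have "\<dots> = (\<Sum>i=0..k. real (k choose i) * (fact i * fps_nth A i))"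
  proof (rule sum.cong[OF refl])
    fix i assume "i \<in> {0..k}"
    then have "real (k choose i) = fact k / (fact i * fact (k - i))" by (simp add: binomial_fact)
    then show "fact k * (fps_nth A i / fact (k - i)) = real (k choose i) * (fact i * fps_nth A i)"
      by (simp add: field_simps)
  qed
  finally show ?thesis .
qed

lemma fact_deriv: "fact i * fps_nth (fps_deriv (G d)) i = E (Suc i) d"
  by (simp add: E_G algebra_simps)

lemma E_rec: "real (d + 2) * E k (Suc d) = R (\<lambda>j. E j d) k (real (Suc d))"
proof -
  have "real (d + 2) * E k (Suc d) = fact k * fps_nth (fps_const (real (d + 2)) * G (Suc d)) k"
    by (simp add: E_G mult.left_commute)
  also have "\<dots> =
        fact k * fps_nth (G d + fps_const (real (d + 1)) * (G d * fps_exp 1)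
          + fps_deriv (G d) - fps_deriv (G d) * fps_exp 1) k"
    by (simp only: G_rec)
  also have "\<dots> = fact k * fps_nth (G d) k + real (d + 1) * (fact k * fps_nth (G d * fps_exp 1) k)
      + fact k * fps_nth (fps_deriv (G d)) k - fact k * fps_nth (fps_deriv (G d) * fps_exp 1) k"
    apply (simp only: fps_add_nth fps_sub_nth fps_mult_left_const_nth)
    apply (simp only: distrib_left right_diff_distrib mult.left_commute)
    done
  also have "\<dots> = R (\<lambda>j. E j d) k (real (Suc d))"
    unfolding conv_e fact_deriv R_def by (simp add: E_G algebra_simps)
  finally show ?thesis .
qed

lemma E_base: "E 0 0 = 1" "E 1 0 = 0"
  by (simp_all add: E_def expm1_div_def fps_mult_nth power2_eq_square numeral_2_eq_2)

lemma M_E: "k \<le> Suc d \<Longrightarrow> M (Suc d) k = fact (Suc d) * E k d"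
proof (induction d arbitrary: k)
  case 0
  have "M 1 k = 0 ^ k" by (simp add: M_def)
  then show ?case using 0 E_base by (cases k) auto
next
  case (Suc d)
  have "M (Suc (Suc d)) k = R (M (Suc d)) k (real (Suc d))" by (rule M_rec)
  also have "\<dots> = R (\<lambda>j. fact (Suc d) * E j d) k (real (Suc d))"
  proof (rule R_cong)
    show "\<forall>i<k. M (Suc d) i = fact (Suc d) * E i d" using Suc by auto
    show "M (Suc d) k = fact (Suc d) * E k d \<or> real (Suc d) = real k - 1"
    proof (cases "k \<le> Suc d")
      case True then show ?thesis using Suc by auto
    next
      case False then have "k = Suc (Suc d)" using Suc.prems by auto
      then show ?thesis by simp
    qed
  qed
  also have "\<dots> = fact (Suc d) * R (\<lambda>j. E j d) k (real (Suc d))" by (rule R_lin)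
  also have "\<dots> = fact (Suc d) * (real (d + 2) * E k (Suc d))" by (simp only: E_rec)
  also have "\<dots> = fact (Suc (Suc d)) * E k (Suc d)" by (simp add: algebra_simps)
  finally show ?case .
qed

lemma descents_dl:
  "descents n \<sigma> = dl (map \<sigma> [1..<Suc n])"
proof -
  define xs where "xs = map \<sigma> [1..<Suc n]"
  have L: "length xs = n" by (simp add: xs_def)
  have N: "xs ! j = \<sigma> (Suc j)" if "j < n" for j using that by (simp add: xs_def del: upt_Suc)
  have e: "{j. Suc j < length xs \<and> xs ! Suc j < xs ! j} = {j. Suc j < n \<and> \<sigma> (Suc (Suc j)) < \<sigma> (Suc j)}"
    using L N by auto
  have "{i \<in> {1..<n}. \<sigma> (Suc i) < \<sigma> i} = Suc ` {j. Suc j < n \<and> \<sigma> (Suc (Suc j)) < \<sigma> (Suc j)}"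
    apply (rule set_eqI)
    subgoal for i by (cases i) auto
    done
  then show ?thesis unfolding descents_def dl_def xs_def[symmetric] e by (simp add: card_image)
qed

lemma PL_perm_image:
  "PL n = (\<lambda>\<sigma>. map \<sigma> [1..<Suc n]) ` {\<sigma>. \<sigma> permutes {1..n}}"
proof (rule set_eqI, rule iffI)
  fix xs assume xs: "xs \<in> PL n"
  have d: "distinct xs" "set xs = {1..n}" using xs by (auto simp: permutations_of_set_def)
  have l: "length xs = n" using xs by (rule PL_length)
  define \<sigma> where "\<sigma> = (\<lambda>i. if i \<in> {1..n} then xs ! (i - 1) else i)"
  have inj: "inj_on \<sigma> {1..n}"
  proof (rule inj_onI)
    fix i j assume "i \<in> {1..n}" "j \<in> {1..n}" "\<sigma> i = \<sigma> j"
    then have "xs ! (i - 1) = xs ! (j - 1)" "i - 1 < length xs" "j - 1 < length xs"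
      using l by (auto simp: \<sigma>_def)
    then have "i - 1 = j - 1" using d(1) nth_eq_iff_index_eq by blast
    then show "i = j" using \<open>i \<in> {1..n}\<close> \<open>j \<in> {1..n}\<close> by auto
  qed
  have sub: "\<sigma> ` {1..n} \<subseteq> {1..n}"
  proof
    fix y assume "y \<in> \<sigma> ` {1..n}"
    then obtain i where i: "i \<in> {1..n}" "y = xs ! (i - 1)" by (auto simp: \<sigma>_def)
    then have "y \<in> set xs" using l by auto
    then show "y \<in> {1..n}" using d by auto
  qed
  have bij: "bij_betw \<sigma> {1..n} {1..n}"
    unfolding bij_betw_def using inj endo_inj_surj[OF finite_atLeastAtMost sub inj] by blast
  have "\<sigma> permutes {1..n}"
    by (rule bij_imp_permutes[OF bij]) (auto simp: \<sigma>_def)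
  moreover have "map \<sigma> [1..<Suc n] = xs"
    by (rule nth_equalityI) (auto simp: l \<sigma>_def simp del: upt_Suc)
  ultimately show "xs \<in> (\<lambda>\<sigma>. map \<sigma> [1..<Suc n]) ` {\<sigma>. \<sigma> permutes {1..n}}" by blast
next
  fix xs assume "xs \<in> (\<lambda>\<sigma>. map \<sigma> [1..<Suc n]) ` {\<sigma>. \<sigma> permutes {1..n}}"
  then obtain \<sigma> where p: "\<sigma> permutes {1..n}" and xs: "xs = map \<sigma> [1..<Suc n]" by auto
  have "set xs = \<sigma> ` {1..n}" unfolding xs by auto
  also have "\<dots> = {1..n}" using p by (rule permutes_image)
  finally have "set xs = {1..n}" .
  moreover have "distinct xs" unfolding xs
    by (simp add: distinct_map) (metis atLeastLessThanSuc_atLeastAtMost p permutes_inj_on)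
  ultimately show "xs \<in> PL n" by (simp add: permutations_of_set_def)
qed

lemma PL_perm_inj:
  "inj_on (\<lambda>\<sigma>. map \<sigma> [1..<Suc n]) {\<sigma>. \<sigma> permutes {1..n}}"
proof (rule inj_onI)
  fix \<sigma> \<tau> assume "\<sigma> \<in> {\<sigma>. \<sigma> permutes {1..n}}" "\<tau> \<in> {\<sigma>. \<sigma> permutes {1..n}}"
    and eq: "map \<sigma> [1..<Suc n] = map \<tau> [1..<Suc n]"
  then have p: "\<sigma> permutes {1..n}" "\<tau> permutes {1..n}" by auto
  show "\<sigma> = \<tau>"
  proof
    fix x show "\<sigma> x = \<tau> x"
    proof (cases "x \<in> {1..n}")
      case True
      then show ?thesis using eq by (auto simp: map_eq_conv)
    next
      case False
      then show ?thesis using p by (simp add: permutes_not_in)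
    qed
  qed
qed

lemma sum_perm_PL:
  fixes F :: "nat \<Rightarrow> real"
  shows "(\<Sum>\<sigma>\<in>{\<sigma>. \<sigma> permutes {1..n}}. F (descents n \<sigma>)) = (\<Sum>xs\<in>PL n. F (dl xs))"
  unfolding PL_perm_image by (subst sum.reindex[OF PL_perm_inj]) (simp add: descents_dl)

lemma expect_moment:
  assumes "k \<le> d + 1"
  shows "E' k d = measure_pmf.expectation (unif_perm (d + 1))
                       (\<lambda>\<sigma>. (real (descents (d + 1) \<sigma>) - real d / 2) ^ k)"
proof -
  let ?S = "{\<sigma>. \<sigma> permutes {1..Suc d}}"
  have fin: "finite ?S" by (rule finite_permutations) simp
  have ne: "?S \<noteq> {}" using permutes_id by blast
  have card: "card ?S = fact (Suc d)" by (rule card_permutations) simp_all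
  have "measure_pmf.expectation (unif_perm (d + 1))
           (\<lambda>\<sigma>. (real (descents (d + 1) \<sigma>) - real d / 2) ^ k)
       = (\<Sum>\<sigma>\<in>?S. (real (descents (Suc d) \<sigma>) - real d / 2) ^ k) / fact (Suc d)"
    unfolding unif_perm_def using fin ne card by (simp add: integral_pmf_of_set algebra_simps)
  also have "(\<Sum>\<sigma>\<in>?S. (real (descents (Suc d) \<sigma>) - real d / 2) ^ k)
     = (\<Sum>xs\<in>PL (Suc d). (real (dl xs) - real d / 2) ^ k)"
    by (rule sum_perm_PL)
  also have "\<dots> = (\<Sum>xs\<in>PL (Suc d). \<Sum>i=0..k. real (k choose i) * real (dl xs) ^ i * (- real d / 2) ^ (k - i))"
  proof -
    have bin: "(x - real d / 2) ^ k = (\<Sum>i=0..k. real (k choose i) * x ^ i * (- real d / 2) ^ (k - i))" for x :: real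
    proof -
      have "x - real d / 2 = x + (- real d / 2)" by simp
      then show ?thesis unfolding atMost_atLeast0[symmetric] by (simp only: binomial_ring)
    qed
    show ?thesis by (simp only: bin)
  qed
  also have "\<dots> = (\<Sum>i=0..k. \<Sum>xs\<in>PL (Suc d). real (k choose i) * real (dl xs) ^ i * (- real d / 2) ^ (k - i))"
    by (rule sum.swap)
  also have "\<dots> = (\<Sum>i=0..k. real (k choose i) * M (Suc d) i * (- real d / 2) ^ (k - i))"
    unfolding M_def by (simp only: sum_distrib_right[symmetric] sum_distrib_left[symmetric])
  also have "\<dots> = (\<Sum>i=0..k. fact (Suc d) * (real (k choose i) * E i d * (- real d / 2) ^ (k - i)))"
    by (rule sum.cong[OF refl]) (use assms in \<open>simp add: M_E\<close>)
  also have "\<dots> = fact (Suc d) * E' k d" by (simp add: E'_def sum_distrib_left)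
  finally show ?thesis by simp
qed

definition S :: "real fps" where
  "S = Abs_fps (\<lambda>n. if even n then 1 / (4 ^ (n div 2) * fact (n + 1)) else 0)"

lemma binom_over_fact:
  assumes "i \<le> k"
  shows "real (k choose i) / fact k = 1 / (fact i * fact (k - i))"
  using assms by (simp add: binomial_fact)

lemma H_G: "Abs_fps (\<lambda>k. E' k d / fact k) = G d * fps_exp (- real d / 2)"
proof (rule fps_ext)
  fix k
  have "E' k d / fact k = (\<Sum>i=0..k. (real (k choose i) / fact k) * E i d * (- real d / 2) ^ (k - i))"
    unfolding E'_def by (simp add: sum_divide_distrib)
  also have "\<dots> = (\<Sum>i=0..k. fps_nth (G d) i * ((- real d / 2) ^ (k - i) / fact (k - i)))"
  proof (rule sum.cong[OF refl])
    fix i assume "i \<in> {0..k}"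
    then have "real (k choose i) / fact k = 1 / (fact i * fact (k - i))" by (simp add: binom_over_fact)
    then show "(real (k choose i) / fact k) * E i d * (- real d / 2) ^ (k - i) =
          fps_nth (G d) i * ((- real d / 2) ^ (k - i) / fact (k - i))"
      by (simp add: E_G)
  qed
  also have "\<dots> = fps_nth (G d * fps_exp (- real d / 2)) k"
    by (simp add: fps_mult_nth)
  finally show "fps_nth (Abs_fps (\<lambda>k. E' k d / fact k)) k = fps_nth (G d * fps_exp (- real d / 2)) k"
    by simp
qed

lemma G_pow: "G d * fps_exp (- real d / 2) = (expm1_div * fps_exp (- 1 / 2)) ^ (d + 2)"
proof -
  have "fps_exp (- 1 / 2 :: real) ^ (d + 2) = fps_exp (of_nat (d + 2) * (- 1 / 2))"
    by (rule fps_exp_power_mult)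
  also have "\<dots> = fps_exp (-1) * fps_exp (- real d / 2)"
    by (simp flip: fps_exp_add_mult) (simp add: field_simps)
  finally have A: "fps_exp (- 1 / 2 :: real) ^ (d + 2) = fps_exp (-1) * fps_exp (- real d / 2)" .
  have "G d * fps_exp (- real d / 2) = expm1_div ^ (d + 2) * (fps_exp (-1) * fps_exp (- real d / 2))"
    by (simp add: G_def mult.assoc)
  also have "\<dots> = expm1_div ^ (d + 2) * fps_exp (- 1 / 2) ^ (d + 2)" by (simp only: A)
  also have "\<dots> = (expm1_div * fps_exp (- 1 / 2)) ^ (d + 2)" by (simp only: power_mult_distrib)
  finally show ?thesis .
qed

lemma gS: "expm1_div * fps_exp (- 1 / 2) = S"
proof (rule Xcancel)
  have "fps_X * (expm1_div * fps_exp (- 1 / 2)) = (fps_exp 1 - 1) * fps_exp (- 1 / 2 :: real)"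
    by (simp add: Xg flip: mult.assoc)
  also have "\<dots> = fps_exp (1 / 2) - fps_exp (- 1 / 2)"
    by (simp add: algebra_simps flip: fps_exp_add_mult)
  also have "\<dots> = fps_X * S"
  proof (rule fps_ext)
    fix n
    show "fps_nth (fps_exp (1 / 2) - fps_exp (- 1 / 2 :: real)) n = fps_nth (fps_X * S) n"
    proof (cases n)
      case 0 then show ?thesis by simp
    next
      case (Suc m)
      show ?thesis
      proof (cases "even m")
        case True
        then obtain j where j: "m = 2 * j" by blast
        have p4: "(4::real) ^ (m div 2) = 2 ^ m" by (simp add: j power_mult)
        have h: "(1 / 2 :: real) ^ Suc m = 1 / (2 * 2 ^ m)" by (simp add: power_divide)
        have hm: "(- 1 / 2 :: real) ^ Suc m = - (1 / (2 * 2 ^ m))"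
          using True h by (simp add: power_minus_odd)
        have F: "(fact (Suc m) :: real) > 0" "(2::real) ^ m > 0" by simp_all
        have key: "(1 / (2 * P)) / F - (- (1 / (2 * P))) / F = 1 / (P * F)" if "F > 0" "P > 0" for F P :: real
          using that by (simp add: field_simps)
        have l: "fps_nth (fps_exp (1 / 2) - fps_exp (- 1 / 2 :: real)) n
            = (1 / (2 * 2 ^ m)) / fact (Suc m) - (- (1 / (2 * 2 ^ m))) / fact (Suc m)"
          using Suc h hm by (simp del: fact_Suc)
        have r: "fps_nth (fps_X * S) n = 1 / (2 ^ m * fact (Suc m))"
          using Suc True p4 by (simp add: S_def del: fact_Suc)
        show ?thesis unfolding l r by (rule key[OF F])
      next
        case False
        have "(- 1 / 2 :: real) ^ Suc m = (1 / 2) ^ Suc m"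
          using False by (simp add: power_minus_even)
        then show ?thesis using False Suc by (simp add: S_def algebra_simps)
      qed
    qed
  qed
  finally show "fps_X * (expm1_div * fps_exp (- 1 / 2)) = fps_X * S" .
qed

lemma part2: "Abs_fps (\<lambda>k. E' k d / fact k) = S ^ (d + 2)"
  unfolding H_G G_pow gS ..

lemma part1: "E' k (a + b + 2) = (\<Sum>i=0..k. real (k choose i) * E' i a * E' (k - i) b)"
proof -
  have "Abs_fps (\<lambda>k. E' k (a + b + 2) / fact k) = Abs_fps (\<lambda>k. E' k a / fact k) * Abs_fps (\<lambda>k. E' k b / fact k)"
    unfolding part2 by (simp add: power_add[symmetric])
  then have "fps_nth (Abs_fps (\<lambda>k. E' k (a + b + 2) / fact k)) k =
     fps_nth (Abs_fps (\<lambda>k. E' k a / fact k) * Abs_fps (\<lambda>k. E' k b / fact k)) k" by simp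
  then have "E' k (a + b + 2) / fact k = (\<Sum>i=0..k. (E' i a / fact i) * (E' (k - i) b / fact (k - i)))"
    by (simp add: fps_mult_nth)
  then have "E' k (a + b + 2) = fact k * (\<Sum>i=0..k. (E' i a / fact i) * (E' (k - i) b / fact (k - i)))"
    by (simp add: field_simps)
  also have "\<dots> = (\<Sum>i=0..k. real (k choose i) * E' i a * E' (k - i) b)"
    unfolding sum_distrib_left
  proof (rule sum.cong[OF refl])
    fix i assume "i \<in> {0..k}"
    then have "real (k choose i) = fact k / (fact i * fact (k - i))" by (simp add: binomial_fact)
    then show "fact k * (E' i a / fact i * (E' (k - i) b / fact (k - i))) = real (k choose i) * E' i a * E' (k - i) b"
      by simp
  qed
  finally show ?thesis .
qed

theorem corollary3p13:
  shows "(\<forall>a b k. E' k (a + b + 2) =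
            (\<Sum>i=0..k. real (k choose i) * E' i a * E' (k - i) b))
       \<and> (\<forall>d. Abs_fps (\<lambda>k. E' k d / fact k) =
            (Abs_fps (\<lambda>n. if even n then 1 / (4 ^ (n div 2) * fact (n + 1)) else 0)) ^ (d + 2))
       \<and> (\<forall>d k. k \<le> d + 1 \<longrightarrow>
            E' k d = measure_pmf.expectation (unif_perm (d + 1))
                       (\<lambda>\<sigma>. (real (descents (d + 1) \<sigma>) - real d / 2) ^ k))"
  using part1 part2[unfolded S_def] expect_moment by blast

end
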